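(* Fix $\theta,E$, $0<\varepsilon<1/7$, $0<\hat\rho<1/2$, $\ell\in\mathbb{N}$ and $1<\gamma\le|\log\varepsilon|$; set $M=\max\{\ell,|\log\hat\rho|\}$, let $\hat\ell\in\mathbb{N}$ with $\hat\ell>16|\log\varepsilon|M$, and let $\check\gamma=\gamma-6|\log\varepsilon|M/\hat\ell$. Suppose the finite interval $\hat\Lambda\subset\mathbb{Z}$ is partitioned by $\mathcal{P}$ into consecutive intervals $\Lambda_l\cup\Lambda\cup\Lambda_r$ (left to right) such that: (1) $\Lambda_l$ and $\Lambda_r$ each satisfy the Green's function decay property for $(\ell,\gamma)$; (2) $R^{\hat\Lambda}=(H^{\hat\Lambda}(\theta)-E)^{-1}$ is well defined and, writing $\Lambda=[a,b]$ and $P$ for the coordinate projection onto $[a-\ell,b+\ell]\cap\hat\Lambda$, one has $\|P R^{\hat\Lambda}\Gamma^{\hat\Lambda}_{\mathcal{P}}\|\le 2\hat\rho^{-1}$; (3) $|\Lambda|\le M$. Then $\hat\Lambda$ satisfies the Green's function decay property for $(\hat\ell,\check\gamma)$.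
   Context: $H^{\Lambda}(\theta)$ is the Dirichlet restriction to a finite interval $\Lambda\subset\mathbb{Z}$ of $H=\varepsilon\Delta+V$, $(H\psi)(n)=\varepsilon(\psi(n+1)+\psi(n-1))+V_n\psi(n)$, with $V_n=v(\theta+n\alpha)$ a real bounded potential: a tridiagonal symmetric matrix with diagonal $V_m$, $m\in\Lambda$, and off-diagonal entries $\varepsilon$. For a partition $\mathcal{P}$ of $\Lambda$ into consecutive intervals $\Lambda_j$, $H^\Lambda_{\mathcal P}=\bigoplus_j H^{\Lambda_j}$ and $\Gamma^\Lambda_{\mathcal P}=H^\Lambda-H^\Lambda_{\mathcal P}$ (the $\varepsilon$ hopping terms connecting adjacent blocks); $R^\Lambda=(H^\Lambda-E)^{-1}$, $R^\Lambda(m,n)=\langle\delta_m,R^\Lambda\delta_n\rangle$. An interval $\Lambda$ satisfies the Green's function decay property for $(\ell,\gamma)$ (at the given $\theta,E$) if $E\notin\operatorname{spec}H^\Lambda(\theta)$ and $\log|R^\Lambda(m,n)|\le-\gamma|m-n|$ for all $m,n\in\Lambda$ with $|m-n|\ge\ell$. *)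

theory Defs
  imports Complex_Main
begin

text \<open>Operators on l^2(S) for a finite set S of integers are represented by their
matrix entries A :: int => int => real (entries outside S x S are ignored/zero).\<close>

definition pot :: "(real \<Rightarrow> real) \<Rightarrow> real \<Rightarrow> real \<Rightarrow> int \<Rightarrow> real" where
  "pot v \<alpha> \<theta> n = v (\<theta> + real_of_int n * \<alpha>)"

definition Hrestr :: "real \<Rightarrow> (int \<Rightarrow> real) \<Rightarrow> int set \<Rightarrow> int \<Rightarrow> int \<Rightarrow> real" where
  "Hrestr \<epsilon> V \<Lambda> m n =
     (if m \<in> \<Lambda> \<and> n \<in> \<Lambda> then
        (if m = n then V m else if \<bar>m - n\<bar> = 1 then \<epsilon> else 0)
      else 0)"

definition matmul :: "int set \<Rightarrow> (int \<Rightarrow> int \<Rightarrow> real) \<Rightarrow> (int \<Rightarrow> int \<Rightarrow> real) \<Rightarrow> int \<Rightarrow> int \<Rightarrow> real" where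
  "matmul S A B m n = (\<Sum>k\<in>S. A m k * B k n)"

definition in_spec :: "int set \<Rightarrow> (int \<Rightarrow> int \<Rightarrow> real) \<Rightarrow> real \<Rightarrow> bool" where
  "in_spec S A E \<longleftrightarrow> (\<exists>\<psi> :: int \<Rightarrow> real. (\<exists>n\<in>S. \<psi> n \<noteq> 0) \<and>
       (\<forall>m\<in>S. (\<Sum>n\<in>S. A m n * \<psi> n) = E * \<psi> m))"

text \<open>Resolvent R^Lambda = (H^Lambda - E)^{-1}, as the unique matrix on Lambda x Lambda
  inverting H^Lambda - E (meaningful when E is not in the spectrum).\<close>
definition resolvent :: "real \<Rightarrow> (int \<Rightarrow> real) \<Rightarrow> int set \<Rightarrow> real \<Rightarrow> int \<Rightarrow> int \<Rightarrow> real" where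
  "resolvent \<epsilon> V \<Lambda> E = (THE G. (\<forall>m n. (m \<notin> \<Lambda> \<or> n \<notin> \<Lambda>) \<longrightarrow> G m n = 0) \<and>
      (\<forall>m\<in>\<Lambda>. \<forall>n\<in>\<Lambda>.
         (\<Sum>k\<in>\<Lambda>. (Hrestr \<epsilon> V \<Lambda> m k - (if m = k then E else 0)) * G k n)
           = (if m = n then 1 else 0)))"

text \<open>Green's function decay property for (ell, gamma). The condition
  log |R(m,n)| <= -gamma |m-n| is written as |R(m,n)| <= exp(-gamma |m-n|)
  (equivalent, with the convention log 0 = -infinity).\<close>
definition GFD :: "real \<Rightarrow> (int \<Rightarrow> real) \<Rightarrow> int set \<Rightarrow> real \<Rightarrow> nat \<Rightarrow> real \<Rightarrow> bool" where
  "GFD \<epsilon> V \<Lambda> E l \<gamma> \<longleftrightarrow> \<not> in_spec \<Lambda> (Hrestr \<epsilon> V \<Lambda>) E \<and>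
     (\<forall>m\<in>\<Lambda>. \<forall>n\<in>\<Lambda>. \<bar>m - n\<bar> \<ge> int l \<longrightarrow>
        \<bar>resolvent \<epsilon> V \<Lambda> E m n\<bar> \<le> exp (- \<gamma> * real_of_int \<bar>m - n\<bar>))"

definition Hpart :: "real \<Rightarrow> (int \<Rightarrow> real) \<Rightarrow> int set list \<Rightarrow> int \<Rightarrow> int \<Rightarrow> real" where
  "Hpart \<epsilon> V P m n = (\<Sum>J\<leftarrow>P. Hrestr \<epsilon> V J m n)"

definition Gammap :: "real \<Rightarrow> (int \<Rightarrow> real) \<Rightarrow> int set \<Rightarrow> int set list \<Rightarrow> int \<Rightarrow> int \<Rightarrow> real" where
  "Gammap \<epsilon> V \<Lambda> P m n = Hrestr \<epsilon> V \<Lambda> m n - Hpart \<epsilon> V P m n"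

definition proj :: "int set \<Rightarrow> int \<Rightarrow> int \<Rightarrow> real" where
  "proj T m n = (if m = n \<and> m \<in> T then 1 else 0)"

text \<open>Operator norm on l^2(S) (real Euclidean norm; for real matrices this equals
  the complex l^2 operator norm).\<close>
definition opnorm :: "int set \<Rightarrow> (int \<Rightarrow> int \<Rightarrow> real) \<Rightarrow> real" where
  "opnorm S A = Sup {sqrt (\<Sum>m\<in>S. (\<Sum>n\<in>S. A m n * x n)\<^sup>2) | x. (\<Sum>n\<in>S. (x n)\<^sup>2) \<le> 1}"

end

theory Submission
  imports Defs "Jordan_Normal_Form.Determinant"
begin

lemma mult_entry: assumes "(A::real mat) \<in> carrier_mat N N" "B \<in> carrier_mat N N" "i<N" "j<N"
  shows "(A*B)$$(i,j) = (\<Sum>k<N. A$$(i,k) * B$$(k,j))"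
  using assms by (simp add: scalar_prod_def lessThan_atLeast0)

lemma inv_exists:
  fixes A :: "int \<Rightarrow> int \<Rightarrow> real"
  assumes fin: "finite S"
    and inj: "\<And>\<psi>. (\<forall>m\<in>S. (\<Sum>n\<in>S. A m n * \<psi> n) = 0) \<Longrightarrow> \<forall>n\<in>S. \<psi> n = 0"
  shows "\<exists>G. (\<forall>m n. (m\<notin>S \<or> n\<notin>S) \<longrightarrow> G m n = 0) \<and>
     (\<forall>m\<in>S. \<forall>n\<in>S. (\<Sum>k\<in>S. A m k * G k n) = (if m=n then 1 else 0)) \<and>
     (\<forall>m\<in>S. \<forall>n\<in>S. (\<Sum>k\<in>S. G m k * A k n) = (if m=n then 1 else 0))"
proof -
  define N where "N = card S"
  obtain f where f: "bij_betw f {..<N} S" using ex_bij_betw_nat_finite[OF fin] N_def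
    by (metis lessThan_atLeast0)
  define g where "g = the_inv_into {..<N} f"
  have g1: "\<And>m. m \<in> S \<Longrightarrow> g m < N \<and> f (g m) = m"
    using f unfolding g_def bij_betw_def
    by (metis f_the_inv_into_f lessThan_iff the_inv_into_into subset_refl)
  have g2: "\<And>i. i < N \<Longrightarrow> g (f i) = i"
    using f unfolding g_def bij_betw_def by (simp add: the_inv_into_f_f)
  have fS: "\<And>i. i < N \<Longrightarrow> f i \<in> S" using f bij_betwE by blast
  have reidx: "\<And>h. (\<Sum>k\<in>S. h k) = (\<Sum>i<N. h (f i))"
    using sum.reindex_bij_betw[OF f] by metis
  define Am :: "real mat" where "Am = mat N N (\<lambda>(i,j). A (f i) (f j))"
  have Am: "Am \<in> carrier_mat N N" unfolding Am_def by simp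
  have "det Am \<noteq> 0"
  proof
    assume "det Am = 0"
    then obtain v where v: "v \<in> carrier_vec N" "v \<noteq> 0\<^sub>v N" "Am *\<^sub>v v = 0\<^sub>v N"
      using det_0_iff_vec_prod_zero_field[OF Am] by auto
    define \<psi> where "\<psi> n = v $ (g n)" for n
    have "\<forall>m\<in>S. (\<Sum>n\<in>S. A m n * \<psi> n) = 0"
    proof
      fix m assume m: "m \<in> S"
      have "(\<Sum>n\<in>S. A m n * \<psi> n) = (\<Sum>i<N. A m (f i) * v $ i)"
        unfolding reidx \<psi>_def using g2 by simp
      also have "\<dots> = (Am *\<^sub>v v) $ (g m)"
        using g1[OF m] v(1) unfolding Am_def
        by (simp add: scalar_prod_def row_def atLeast0LessThan)
      also have "\<dots> = 0" using v(3) g1[OF m] by simp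
      finally show "(\<Sum>n\<in>S. A m n * \<psi> n) = 0" .
    qed
    from inj[OF this] have "\<And>i. i < N \<Longrightarrow> v $ i = 0"
      using fS g2 unfolding \<psi>_def by metis
    hence "v = 0\<^sub>v N" using v(1) by (intro eq_vecI) auto
    with v(2) show False by simp
  qed
  from det_non_zero_imp_unit[OF Am this, of "()"]
  obtain B where B: "B \<in> carrier_mat N N" "B * Am = 1\<^sub>m N" "Am * B = 1\<^sub>m N"
    unfolding Units_def ring_mat_def by auto
  define G where "G m n = (if m \<in> S \<and> n \<in> S then B $$ (g m, g n) else 0)" for m n
  have 1: "\<forall>m\<in>S. \<forall>n\<in>S. (\<Sum>k\<in>S. A m k * G k n) = (if m=n then 1 else 0)"
  proof (intro ballI)
    fix m n assume m: "m \<in> S" and n: "n \<in> S"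
    have "(\<Sum>k\<in>S. A m k * G k n) = (\<Sum>i<N. A m (f i) * B $$ (i, g n))"
      unfolding reidx G_def using g2 fS n by simp
    also have "\<dots> = (\<Sum>i<N. Am $$ (g m, i) * B $$ (i, g n))"
      using g1[OF m] unfolding Am_def by simp
    also have "\<dots> = (Am * B) $$ (g m, g n)"
      using mult_entry[OF Am B(1) conjunct1[OF g1[OF m]] conjunct1[OF g1[OF n]]] by simp
    also have "\<dots> = (if m=n then 1 else 0)"
    proof -
      have e: "g m = g n \<longleftrightarrow> m = n" using g1[OF m] g1[OF n] by metis
      show ?thesis unfolding B(3) using g1[OF m] g1[OF n] e by (simp only: index_one_mat)
    qed
    finally show "(\<Sum>k\<in>S. A m k * G k n) = (if m=n then 1 else 0)" .
  qed
  have 2: "\<forall>m\<in>S. \<forall>n\<in>S. (\<Sum>k\<in>S. G m k * A k n) = (if m=n then 1 else 0)"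
  proof (intro ballI)
    fix m n assume m: "m \<in> S" and n: "n \<in> S"
    have "(\<Sum>k\<in>S. G m k * A k n) = (\<Sum>i<N. B $$ (g m, i) * A (f i) n)"
      unfolding reidx G_def using g2 fS m by simp
    also have "\<dots> = (\<Sum>i<N. B $$ (g m, i) * Am $$ (i, g n))"
      using g1[OF n] unfolding Am_def by simp
    also have "\<dots> = (B * Am) $$ (g m, g n)"
      using mult_entry[OF B(1) Am conjunct1[OF g1[OF m]] conjunct1[OF g1[OF n]]] by simp
    also have "\<dots> = (if m=n then 1 else 0)"
    proof -
      have e: "g m = g n \<longleftrightarrow> m = n" using g1[OF m] g1[OF n] by metis
      show ?thesis unfolding B(2) using g1[OF m] g1[OF n] e by (simp only: index_one_mat)
    qed
    finally show "(\<Sum>k\<in>S. G m k * A k n) = (if m=n then 1 else 0)" .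
  qed
  show ?thesis using 1 2 by (intro exI[of _ G]) (auto simp: G_def)
qed


lemma Hrestr_sym: "Hrestr \<epsilon> V S m k = Hrestr \<epsilon> V S k m"
  by (auto simp: Hrestr_def abs_minus_commute)

lemma res_props:
  assumes fin: "finite S" and ns: "\<not> in_spec S (Hrestr \<epsilon> V S) E"
  shows "\<forall>m n. (m\<notin>S \<or> n\<notin>S) \<longrightarrow> resolvent \<epsilon> V S E m n = 0"
   and "\<forall>m\<in>S. \<forall>n\<in>S. (\<Sum>k\<in>S. (Hrestr \<epsilon> V S m k - (if m = k then E else 0)) * resolvent \<epsilon> V S E k n) = (if m=n then 1 else 0)"
   and "\<forall>m\<in>S. \<forall>n\<in>S. (\<Sum>k\<in>S. resolvent \<epsilon> V S E m k * (Hrestr \<epsilon> V S k n - (if k = n then E else 0))) = (if m=n then 1 else 0)"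
   and "\<forall>m n. resolvent \<epsilon> V S E m n = resolvent \<epsilon> V S E n m"
proof -
  define A where "A m k = Hrestr \<epsilon> V S m k - (if m = k then E else 0)" for m k
  have Asym: "A m k = A k m" for m k unfolding A_def using Hrestr_sym[of \<epsilon> V S m k] by auto
  have inj: "\<forall>n\<in>S. \<psi> n = 0" if h: "\<forall>m\<in>S. (\<Sum>n\<in>S. A m n * \<psi> n) = 0" for \<psi>
  proof -
    have "\<forall>m\<in>S. (\<Sum>n\<in>S. Hrestr \<epsilon> V S m n * \<psi> n) = E * \<psi> m"
    proof
      fix m assume m: "m \<in> S"
      have "(\<Sum>n\<in>S. A m n * \<psi> n) = (\<Sum>n\<in>S. Hrestr \<epsilon> V S m n * \<psi> n) - (\<Sum>n\<in>S. (if m = n then E else 0) * \<psi> n)"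
        unfolding A_def by (simp add: left_diff_distrib sum_subtractf)
      also have "(\<Sum>n\<in>S. (if m = n then E else 0) * \<psi> n) = E * \<psi> m"
      proof -
        have "(\<Sum>n\<in>S. (if m = n then E else 0) * \<psi> n) = (\<Sum>n\<in>S. if m = n then E * \<psi> n else 0)"
          by (rule sum.cong) auto
        thus ?thesis using fin m by simp
      qed
      finally show "(\<Sum>n\<in>S. Hrestr \<epsilon> V S m n * \<psi> n) = E * \<psi> m" using h m by simp
    qed
    thus ?thesis using ns unfolding in_spec_def by blast
  qed
  obtain G where G: "\<forall>m n. (m\<notin>S \<or> n\<notin>S) \<longrightarrow> G m n = 0"
     "\<forall>m\<in>S. \<forall>n\<in>S. (\<Sum>k\<in>S. A m k * G k n) = (if m=n then 1 else 0)"
     "\<forall>m\<in>S. \<forall>n\<in>S. (\<Sum>k\<in>S. G m k * A k n) = (if m=n then 1 else 0)"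
    using inv_exists[OF fin, of A] inj by blast
  have uniq: "G' = G" if h1: "\<forall>m n. (m\<notin>S \<or> n\<notin>S) \<longrightarrow> G' m n = 0"
     and h2: "\<forall>m\<in>S. \<forall>n\<in>S. (\<Sum>k\<in>S. A m k * G' k n) = (if m=n then 1 else 0)" for G'
  proof (intro ext)
    fix m n
    show "G' m n = G m n"
    proof (cases "m \<in> S \<and> n \<in> S")
      case False thus ?thesis using h1 G(1) by auto
    next
      case True
      have "\<forall>k\<in>S. G' k n - G k n = 0"
      proof (rule inj, intro ballI)
        fix m' assume m': "m' \<in> S"
        have "(\<Sum>k\<in>S. A m' k * (G' k n - G k n)) = (\<Sum>k\<in>S. A m' k * G' k n) - (\<Sum>k\<in>S. A m' k * G k n)"
          by (simp add: right_diff_distrib sum_subtractf)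
        thus "(\<Sum>k\<in>S. A m' k * (G' k n - G k n)) = 0" using h2 G(2) m' True by simp
      qed
      thus ?thesis using True by simp
    qed
  qed
  have RG: "resolvent \<epsilon> V S E = G"
    unfolding resolvent_def
  proof (rule the_equality)
    show "(\<forall>m n. m \<notin> S \<or> n \<notin> S \<longrightarrow> G m n = 0) \<and>
      (\<forall>m\<in>S. \<forall>n\<in>S. (\<Sum>k\<in>S. (Hrestr \<epsilon> V S m k - (if m = k then E else 0)) * G k n) = (if m = n then 1 else 0))"
      using G(1,2) unfolding A_def by blast
  next
    fix G' assume "(\<forall>m n. m \<notin> S \<or> n \<notin> S \<longrightarrow> G' m n = 0) \<and>
      (\<forall>m\<in>S. \<forall>n\<in>S. (\<Sum>k\<in>S. (Hrestr \<epsilon> V S m k - (if m = k then E else 0)) * G' k n) = (if m = n then 1 else 0))"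
    thus "G' = G" using uniq unfolding A_def by blast
  qed
  have "(\<lambda>m n. G n m) = G"
  proof (rule uniq)
    show "\<forall>m n. (m\<notin>S \<or> n\<notin>S) \<longrightarrow> G n m = 0" using G(1) by auto
    show "\<forall>m\<in>S. \<forall>n\<in>S. (\<Sum>k\<in>S. A m k * G n k) = (if m=n then 1 else 0)"
    proof (intro ballI)
      fix m n assume "m \<in> S" "n \<in> S"
      have "(\<Sum>k\<in>S. A m k * G n k) = (\<Sum>k\<in>S. G n k * A k m)" using Asym by (simp add: mult.commute)
      thus "(\<Sum>k\<in>S. A m k * G n k) = (if m=n then 1 else 0)" using G(3) \<open>m\<in>S\<close> \<open>n\<in>S\<close> by auto
    qed
  qed
  hence Gsym: "G n m = G m n" for m n by metis
  show "\<forall>m n. (m\<notin>S \<or> n\<notin>S) \<longrightarrow> resolvent \<epsilon> V S E m n = 0" using RG G(1) by simp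
  show "\<forall>m\<in>S. \<forall>n\<in>S. (\<Sum>k\<in>S. (Hrestr \<epsilon> V S m k - (if m = k then E else 0)) * resolvent \<epsilon> V S E k n) = (if m=n then 1 else 0)"
    using RG G(2) unfolding A_def by simp
  show "\<forall>m\<in>S. \<forall>n\<in>S. (\<Sum>k\<in>S. resolvent \<epsilon> V S E m k * (Hrestr \<epsilon> V S k n - (if k = n then E else 0))) = (if m=n then 1 else 0)"
    using RG G(3) unfolding A_def by simp
  show "\<forall>m n. resolvent \<epsilon> V S E m n = resolvent \<epsilon> V S E n m" using RG Gsym by simp
qed

lemma block_col:
  assumes fin: "finite S" and TS: "T \<subseteq> S" and cT: "c \<in> T" and c'S: "c' \<in> S" "c' \<notin> T"
   and nsS: "\<not> in_spec S (Hrestr \<epsilon> V S) E" and nsT: "\<not> in_spec T (Hrestr \<epsilon> V T) E"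
   and bd: "\<forall>k\<in>T. \<forall>j\<in>S. j \<notin> T \<longrightarrow> Hrestr \<epsilon> V S k j = (if k = c \<and> j = c' then \<epsilon> else 0)"
   and m: "m \<in> T" and n: "n \<in> S"
  shows "resolvent \<epsilon> V S E m n = resolvent \<epsilon> V T E m n - \<epsilon> * resolvent \<epsilon> V T E m c * resolvent \<epsilon> V S E c' n"
proof -
  have finT: "finite T" using fin TS finite_subset by blast
  define G where "G = resolvent \<epsilon> V S E"
  define R where "R = resolvent \<epsilon> V T E"
  define AS where "AS k j = Hrestr \<epsilon> V S k j - (if k = j then E else 0)" for k j
  define AT where "AT k j = Hrestr \<epsilon> V T k j - (if k = j then E else 0)" for k j
  note GS = res_props[OF fin nsS, folded G_def]
  note RT = res_props[OF finT nsT, folded R_def]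
  have inner: "(\<Sum>k\<in>T. R m k * AS k j) = (if j\<in>T then (if m=j then 1 else 0) else if j = c' then \<epsilon> * R m c else 0)"
    if j: "j \<in> S" for j
  proof (cases "j \<in> T")
    case True
    have "(\<Sum>k\<in>T. R m k * AS k j) = (\<Sum>k\<in>T. R m k * AT k j)"
      using True TS by (intro sum.cong) (auto simp: AS_def AT_def Hrestr_def)
    also have "\<dots> = (if m=j then 1 else 0)" using RT(3) m True unfolding AT_def by blast
    finally show ?thesis using True by simp
  next
    case False
    have "(\<Sum>k\<in>T. R m k * AS k j) = (\<Sum>k\<in>T. if k = c then (if j = c' then R m c * \<epsilon> else 0) else 0)"
      using False bd j by (intro sum.cong) (auto simp: AS_def)
    also have "\<dots> = (if j = c' then \<epsilon> * R m c else 0)" using finT cT by simp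
    finally show ?thesis using False by simp
  qed
  have "R m n = (\<Sum>k\<in>T. R m k * (if k = n then 1 else 0))"
  proof (cases "n \<in> T")
    case True thus ?thesis using finT by (simp add: if_distrib cong: if_cong)
  next
    case False
    have "(\<Sum>k\<in>T. R m k * (if k = n then 1 else 0)) = 0" using False by (intro sum.neutral) auto
    thus ?thesis using RT(1) False by simp
  qed
  also have "\<dots> = (\<Sum>k\<in>T. R m k * (\<Sum>j\<in>S. AS k j * G j n))"
    using GS(2) n TS unfolding AS_def by (intro sum.cong) auto
  also have "\<dots> = (\<Sum>j\<in>S. (\<Sum>k\<in>T. R m k * AS k j) * G j n)"
    by (simp add: sum_distrib_left sum_distrib_right mult.assoc sum.swap[of _ T S])
  also have "\<dots> = (\<Sum>j\<in>S. (if j = m then G m n else 0) + (if j = c' then \<epsilon> * R m c * G c' n else 0))"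
    using inner m c'S by (intro sum.cong) auto
  also have "\<dots> = G m n + \<epsilon> * R m c * G c' n"
    using fin m TS c'S by (auto simp: sum.distrib)
  finally show ?thesis unfolding G_def R_def by simp
qed

lemma opnorm_entry:
  assumes fin: "finite S" and m: "m \<in> S" and n: "n \<in> S"
  shows "\<bar>A m n\<bar> \<le> opnorm S A"
proof -
  define X where "X = {sqrt (\<Sum>m\<in>S. (\<Sum>n\<in>S. A m n * x n)\<^sup>2) | x. (\<Sum>n\<in>S. (x n)\<^sup>2) \<le> 1}"
  define C where "C = sqrt (\<Sum>m\<in>S. (\<Sum>n\<in>S. \<bar>A m n\<bar>)\<^sup>2)"
  have bdd: "bdd_above X"
  proof (rule bdd_aboveI)
    fix y assume "y \<in> X"
    then obtain x where y: "y = sqrt (\<Sum>m\<in>S. (\<Sum>n\<in>S. A m n * x n)\<^sup>2)" and x: "(\<Sum>n\<in>S. (x n)\<^sup>2) \<le> 1"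
      unfolding X_def by blast
    have x1: "\<bar>x k\<bar> \<le> 1" if k: "k \<in> S" for k
    proof -
      have "(x k)\<^sup>2 \<le> (\<Sum>n\<in>S. (x n)\<^sup>2)" using fin k by (intro member_le_sum) auto
      hence "(x k)\<^sup>2 \<le> 1" using x by simp
      thus ?thesis by (simp add: abs_square_le_1)
    qed
    have "(\<Sum>n\<in>S. A m' n * x n)\<^sup>2 \<le> (\<Sum>n\<in>S. \<bar>A m' n\<bar>)\<^sup>2" for m'
    proof -
      have "\<bar>\<Sum>n\<in>S. A m' n * x n\<bar> \<le> (\<Sum>n\<in>S. \<bar>A m' n * x n\<bar>)" by (rule sum_abs)
      also have "\<dots> \<le> (\<Sum>n\<in>S. \<bar>A m' n\<bar>)"
        using x1 by (intro sum_mono) (auto simp: abs_mult intro: mult_left_le)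
      finally have "\<bar>\<Sum>n\<in>S. A m' n * x n\<bar> \<le> \<bar>\<Sum>n\<in>S. \<bar>A m' n\<bar>\<bar>" by simp
      thus ?thesis using abs_le_square_iff by blast
    qed
    hence "(\<Sum>m\<in>S. (\<Sum>n\<in>S. A m n * x n)\<^sup>2) \<le> (\<Sum>m\<in>S. (\<Sum>n\<in>S. \<bar>A m n\<bar>)\<^sup>2)"
      by (intro sum_mono) auto
    thus "y \<le> C" unfolding y C_def by simp
  qed
  define x0 where "x0 k = (if k = n then 1 else 0 :: real)" for k
  have "(\<Sum>k\<in>S. (x0 k)\<^sup>2) = (\<Sum>k\<in>S. if k = n then 1 else 0)" by (rule sum.cong) (auto simp: x0_def)
  hence "(\<Sum>k\<in>S. (x0 k)\<^sup>2) = 1" using fin n by simp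
  hence mem: "sqrt (\<Sum>m\<in>S. (\<Sum>k\<in>S. A m k * x0 k)\<^sup>2) \<in> X" unfolding X_def by auto
  have "(\<Sum>k\<in>S. A m' k * x0 k) = A m' n" for m'
  proof -
    have "(\<Sum>k\<in>S. A m' k * x0 k) = (\<Sum>k\<in>S. if k = n then A m' n else 0)" by (rule sum.cong) (auto simp: x0_def)
    thus ?thesis using fin n by simp
  qed
  hence "sqrt (\<Sum>m\<in>S. (\<Sum>k\<in>S. A m k * x0 k)\<^sup>2) = sqrt (\<Sum>m'\<in>S. (A m' n)\<^sup>2)" by simp
  also have "\<dots> \<ge> sqrt ((A m n)\<^sup>2)"
    using fin m by (intro real_sqrt_le_mono member_le_sum) auto
  finally have "\<bar>A m n\<bar> \<le> sqrt (\<Sum>m\<in>S. (\<Sum>k\<in>S. A m k * x0 k)\<^sup>2)" by simp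
  also have "\<dots> \<le> Sup X" using mem bdd by (rule cSup_upper)
  finally show ?thesis unfolding opnorm_def X_def by simp
qed

lemma pb: fixes \<epsilon> r g e K :: real
  assumes "0 < \<epsilon>" "\<bar>r\<bar> \<le> e" "\<bar>g\<bar> \<le> K / \<epsilon>"
  shows "\<bar>\<epsilon> * r * g\<bar> \<le> K * e"
proof -
  have "\<bar>\<epsilon> * r * g\<bar> = \<epsilon> * (\<bar>r\<bar> * \<bar>g\<bar>)" using assms(1) by (simp add: abs_mult)
  also have "\<dots> \<le> \<epsilon> * (e * (K / \<epsilon>))"
    using assms by (intro mult_left_mono mult_mono) auto
  also have "\<dots> = K * e" using assms(1) by simp
  finally show ?thesis .
qed

theorem lemmaA2:
  fixes v :: "real \<Rightarrow> real" and \<alpha> \<theta> E \<epsilon> \<rho> \<gamma> :: real and l lh :: nat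
    and a0 a b b1 :: int
  defines "V \<equiv> pot v \<alpha> \<theta>"
  defines "M \<equiv> max (real l) \<bar>ln \<rho>\<bar>"
  defines "\<gamma>c \<equiv> \<gamma> - 6 * \<bar>ln \<epsilon>\<bar> * M / real lh"
  assumes v_bdd: "\<exists>B. \<forall>x. \<bar>v x\<bar> \<le> B"
    and eps: "0 < \<epsilon>" "\<epsilon> < 1/7"
    and rho: "0 < \<rho>" "\<rho> < 1/2"
    and gam: "1 < \<gamma>" "\<gamma> \<le> \<bar>ln \<epsilon>\<bar>"
    and lh_bd: "real lh > 16 * \<bar>ln \<epsilon>\<bar> * M"
    and part: "a0 < a" "a \<le> b" "b < b1"
    and H1: "GFD \<epsilon> V {a0..a-1} E l \<gamma>" "GFD \<epsilon> V {b+1..b1} E l \<gamma>"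
    and H2: "\<not> in_spec {a0..b1} (Hrestr \<epsilon> V {a0..b1}) E"
      "opnorm {a0..b1}
         (matmul {a0..b1} (proj ({a - int l..b + int l} \<inter> {a0..b1}))
            (matmul {a0..b1} (resolvent \<epsilon> V {a0..b1} E)
               (Gammap \<epsilon> V {a0..b1} [{a0..a-1}, {a..b}, {b+1..b1}])))
       \<le> 2 / \<rho>"
    and H3: "real (card {a..b}) \<le> M"
  shows "GFD \<epsilon> V {a0..b1} E lh \<gamma>c"
proof -
  define S where "S = {a0..b1}"
  define Sl where "Sl = {a0..a-1}"
  define Sr where "Sr = {b+1..b1}"
  define G where "G = resolvent \<epsilon> V S E"
  define Rl where "Rl = resolvent \<epsilon> V Sl E"
  define Rr where "Rr = resolvent \<epsilon> V Sr E"
  define L where "L = \<bar>ln \<epsilon>\<bar>"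
  define K where "K = 2 / \<rho>"
  define Q where "Q = 1 + K"
  define ee where "ee t = exp (- \<gamma> * t)" for t :: real
  have finS: "finite S" "finite Sl" "finite Sr" unfolding S_def Sl_def Sr_def by auto
  have nsS: "\<not> in_spec S (Hrestr \<epsilon> V S) E" using H2(1) unfolding S_def .
  have nsl: "\<not> in_spec Sl (Hrestr \<epsilon> V Sl) E" using H1(1) unfolding GFD_def Sl_def by blast
  have nsr: "\<not> in_spec Sr (Hrestr \<epsilon> V Sr) E" using H1(2) unfolding GFD_def Sr_def by blast
  note GS = res_props[OF finS(1) nsS, folded G_def]
  note RL = res_props[OF finS(2) nsl, folded Rl_def]
  note RR = res_props[OF finS(3) nsr, folded Rr_def]
  have Gsym: "G m n = G n m" for m n using GS(4) by blast
  have Dl: "\<bar>Rl x y\<bar> \<le> ee (of_int \<bar>x - y\<bar>)" if "x \<in> Sl" "y \<in> Sl" "int l \<le> \<bar>x - y\<bar>" for x y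
    using H1(1) that unfolding GFD_def Sl_def Rl_def ee_def by auto
  have Dr: "\<bar>Rr x y\<bar> \<le> ee (of_int \<bar>x - y\<bar>)" if "x \<in> Sr" "y \<in> Sr" "int l \<le> \<bar>x - y\<bar>" for x y
    using H1(2) that unfolding GFD_def Sr_def Rr_def ee_def by auto
  have Rl0: "Rl x y = 0" if "y \<notin> Sl" for x y using RL(1) that by blast
  have Rr0: "Rr x y = 0" if "y \<notin> Sr" for x y using RR(1) that by blast
  have Fl: "G m n = Rl m n - \<epsilon> * Rl m (a-1) * G a n" if "m \<in> Sl" "n \<in> S" for m n
    unfolding G_def Rl_def
    by (rule block_col[OF finS(1) _ _ _ _ nsS nsl _ that])
       (use part in \<open>auto simp: S_def Sl_def Hrestr_def abs_if\<close>)
  have Fr: "G m n = Rr m n - \<epsilon> * Rr m (b+1) * G b n" if "m \<in> Sr" "n \<in> S" for m n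
    unfolding G_def Rr_def
    by (rule block_col[OF finS(1) _ _ _ _ nsS nsr _ that])
       (use part in \<open>auto simp: S_def Sr_def Hrestr_def abs_if\<close>)
  define T' where "T' = {a - int l..b + int l} \<inter> {a0..b1}"
  define Gam where "Gam = Gammap \<epsilon> V {a0..b1} [{a0..a-1}, {a..b}, {b+1..b1}]"
  define Pm where "Pm = matmul S (proj T') (matmul S G Gam)"
  have opP: "opnorm S Pm \<le> K" using H2(2) unfolding Pm_def S_def G_def T'_def Gam_def K_def .
  have Gam1: "Gam j (a-1) = (if j = a then \<epsilon> else 0)" if "j \<in> S" for j
    using that part unfolding Gam_def Gammap_def Hpart_def Hrestr_def S_def by (auto simp: abs_if)
  have Gam2: "Gam j (b+1) = (if j = b then \<epsilon> else 0)" if "j \<in> S" for j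
    using that part unfolding Gam_def Gammap_def Hpart_def Hrestr_def S_def by (auto simp: abs_if)
  have aS: "a \<in> S" "b \<in> S" "a - 1 \<in> S" "b + 1 \<in> S" using part unfolding S_def by auto
  have MP: "matmul S (proj T') X x k = (if x \<in> T' then X x k else 0)" if "x \<in> S" for X x k
  proof -
    have "matmul S (proj T') X x k = (\<Sum>y\<in>S. if y = x then (if x \<in> T' then X x k else 0) else 0)"
      unfolding matmul_def proj_def by (rule sum.cong) auto
    thus ?thesis using that finS(1) by simp
  qed
  have MG1: "matmul S G Gam x (a-1) = \<epsilon> * G x a" for x
  proof -
    have "matmul S G Gam x (a-1) = (\<Sum>j\<in>S. if j = a then \<epsilon> * G x a else 0)"
      unfolding matmul_def using Gam1 by (intro sum.cong) auto
    thus ?thesis using aS finS(1) by simp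
  qed
  have MG2: "matmul S G Gam x (b+1) = \<epsilon> * G x b" for x
  proof -
    have "matmul S G Gam x (b+1) = (\<Sum>j\<in>S. if j = b then \<epsilon> * G x b else 0)"
      unfolding matmul_def using Gam2 by (intro sum.cong) auto
    thus ?thesis using aS finS(1) by simp
  qed
  have Bnear: "\<bar>G a x\<bar> \<le> K / \<epsilon> \<and> \<bar>G b x\<bar> \<le> K / \<epsilon>"
    if x: "x \<in> S" "a - int l \<le> x" "x \<le> b + int l" for x
  proof -
    have xT: "x \<in> T'" using x unfolding T'_def S_def by auto
    have "\<bar>Pm x (a-1)\<bar> \<le> K" using opnorm_entry[OF finS(1) x(1) aS(3), of Pm] opP by linarith
    hence "\<epsilon> * \<bar>G x a\<bar> \<le> K" unfolding Pm_def MP[OF x(1)] MG1 using xT eps by (simp add: abs_mult)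
    hence 1: "\<bar>G x a\<bar> \<le> K / \<epsilon>" using eps by (simp add: field_simps)
    have "\<bar>Pm x (b+1)\<bar> \<le> K" using opnorm_entry[OF finS(1) x(1) aS(4), of Pm] opP by linarith
    hence "\<epsilon> * \<bar>G x b\<bar> \<le> K" unfolding Pm_def MP[OF x(1)] MG2 using xT eps by (simp add: abs_mult)
    hence 2: "\<bar>G x b\<bar> \<le> K / \<epsilon>" using eps by (simp add: field_simps)
    show ?thesis using 1 2 Gsym by metis
  qed
  have L: "L = - ln \<epsilon>" "\<gamma> \<le> L" "1 < L" using eps gam unfolding L_def
    by (auto simp: abs_if ln_less_zero_iff)
  have eps1: "\<epsilon> \<le> 1" using eps by simp
  have Kpos: "0 < K" using rho unfolding K_def by simp
  have KK: "K \<le> K / \<epsilon>" using Kpos eps eps1 by (simp add: field_simps)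
  have cardab: "real (card {a..b}) = of_int b - of_int a + 1" using part by simp
  have Mf: "real l \<le> M" "of_int b - of_int a + 1 \<le> M" "1 \<le> M" "real lh > 16 * M"
  proof -
    show "real l \<le> M" unfolding M_def by simp
    show 2: "of_int b - of_int a + 1 \<le> M" using H3 cardab by simp
    thus 3: "1 \<le> M" using part by linarith
    have "1 * M \<le> L * M" using L(3) 3 by (intro mult_right_mono) auto
    hence "16 * M \<le> 16 * L * M" by simp
    thus "real lh > 16 * M" using lh_bd unfolding L_def by linarith
  qed
  have ee_mono: "ee t \<le> ee s" if "s \<le> t" for s t
    using that gam unfolding ee_def by simp
  have ee_pos: "0 < ee t" for t unfolding ee_def by simp
  have ee_add: "ee s * ee t = ee (s + t)" for s t unfolding ee_def by (simp add: exp_add[symmetric] algebra_simps)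
  have ee1: "ee t \<le> 1" if "0 \<le> t" for t using ee_mono[OF that] unfolding ee_def by simp
  have Dl': "\<bar>Rl x y\<bar> \<le> ee (of_int (y - x))" "\<bar>Rl y x\<bar> \<le> ee (of_int (y - x))"
    if "x \<in> Sl" "y \<in> Sl" "int l \<le> y - x" for x y
    using Dl[of x y] Dl[of y x] that by (auto simp: abs_minus_commute)
  have Dr': "\<bar>Rr x y\<bar> \<le> ee (of_int (y - x))" "\<bar>Rr y x\<bar> \<le> ee (of_int (y - x))"
    if "x \<in> Sr" "y \<in> Sr" "int l \<le> y - x" for x y
    using Dr[of x y] Dr[of y x] that by (auto simp: abs_minus_commute)
  have FarL: "\<bar>G a x\<bar> \<le> K * ee (of_int (a - 1 - x)) \<and> \<bar>G b x\<bar> \<le> K * ee (of_int (a - 1 - x))"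
    if x: "x \<in> Sl" "x < a - int l" for x
  proof -
    have xS: "x \<in> S" "a - 1 \<in> Sl" using x part unfolding S_def Sl_def by auto
    have r: "\<bar>Rl x (a-1)\<bar> \<le> ee (of_int (a - 1 - x))" using Dl'(1)[OF x(1) xS(2)] x by simp
    have "G a x = - (\<epsilon> * Rl x (a-1) * G a a)" using Fl[OF x(1) aS(1)] Gsym Rl0[of a x] unfolding Sl_def by auto
    hence 1: "\<bar>G a x\<bar> \<le> K * ee (of_int (a - 1 - x))"
      using pb[OF eps(1) r, of "G a a" K] Bnear[OF aS(1)] part by simp
    have "G b x = - (\<epsilon> * Rl x (a-1) * G a b)" using Fl[OF x(1) aS(2)] Gsym Rl0[of b x] part unfolding Sl_def by auto
    hence 2: "\<bar>G b x\<bar> \<le> K * ee (of_int (a - 1 - x))"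
      using pb[OF eps(1) r, of "G a b" K] Bnear[OF aS(2)] part by simp
    show ?thesis using 1 2 by simp
  qed
  have FarR: "\<bar>G a x\<bar> \<le> K * ee (of_int (x - b - 1)) \<and> \<bar>G b x\<bar> \<le> K * ee (of_int (x - b - 1))"
    if x: "x \<in> Sr" "x > b + int l" for x
  proof -
    have xS: "x \<in> S" "b + 1 \<in> Sr" using x part unfolding S_def Sr_def by auto
    have r: "\<bar>Rr x (b+1)\<bar> \<le> ee (of_int (x - b - 1))" using Dr'(2)[OF xS(2) x(1)] x by (simp add: algebra_simps)
    have "G a x = - (\<epsilon> * Rr x (b+1) * G b a)" using Fr[OF x(1) aS(1)] Gsym Rr0[of a x] part unfolding Sr_def by auto
    hence 1: "\<bar>G a x\<bar> \<le> K * ee (of_int (x - b - 1))"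
      using pb[OF eps(1) r, of "G b a" K] Bnear[OF aS(1)] part by simp
    have "G b x = - (\<epsilon> * Rr x (b+1) * G b b)" using Fr[OF x(1) aS(2)] Gsym Rr0[of b x] unfolding Sr_def by auto
    hence 2: "\<bar>G b x\<bar> \<le> K * ee (of_int (x - b - 1))"
      using pb[OF eps(1) r, of "G b b" K] Bnear[OF aS(2)] part by simp
    show ?thesis using 1 2 by simp
  qed
  have Gall: "\<bar>G a x\<bar> \<le> K / \<epsilon> \<and> \<bar>G b x\<bar> \<le> K / \<epsilon>" if x: "x \<in> S" for x
  proof (cases "a - int l \<le> x \<and> x \<le> b + int l")
    case True thus ?thesis using Bnear x by blast
  next
    case False
    then consider "x < a - int l" | "x > b + int l" by linarith
    thus ?thesis
    proof cases
      case 1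
      hence xl: "x \<in> Sl" using x unfolding S_def Sl_def by auto
      have "K * ee (of_int (a - 1 - x)) \<le> K" using ee1[of "of_int (a - 1 - x)"] Kpos 1 by simp
      thus ?thesis using FarL[OF xl 1] KK by linarith
    next
      case 2
      hence xr: "x \<in> Sr" using x unfolding S_def Sr_def by auto
      have "K * ee (of_int (x - b - 1)) \<le> K" using ee1[of "of_int (x - b - 1)"] Kpos 2 by simp
      thus ?thesis using FarR[OF xr 2] KK by linarith
    qed
  qed
  have num: "Q^2 * ee (d - 2 * M) \<le> exp (- \<gamma>c * d)" if d: "real lh \<le> d" for d
  proof -
    have lhpos: "0 < real lh" using Mf by linarith
    have "ln (1/\<rho>) \<le> M" using rho unfolding M_def by (simp add: ln_div)
    hence r1: "1/\<rho> \<le> exp M" using rho by (metis exp_ln exp_le_cancel_iff zero_less_divide_1_iff)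
    have "Q \<le> 3 / \<rho>" using rho unfolding Q_def K_def by (simp add: field_simps)
    also have "\<dots> \<le> 3 * exp M" using r1 by (simp add: divide_simps)
    finally have "Q \<le> 3 * exp M" .
    moreover have "0 \<le> Q" using Kpos unfolding Q_def by simp
    ultimately have "Q^2 \<le> (3 * exp M)^2" by (rule power_mono)
    also have "\<dots> = 9 * (exp M * exp M)" by (simp add: power2_eq_square)
    also have "exp M * exp M = exp (2 * M)" by (metis exp_add mult_2)
    finally have Q2: "Q^2 \<le> 9 * exp (2 * M)" .
    have eL: "exp L = 1 / \<epsilon>" using L(1) eps by (simp add: exp_minus exp_ln inverse_eq_divide)
    have "7 < 1 / \<epsilon>" using eps by (simp add: field_simps)
    hence "7 \<le> exp L" using eL by simp
    hence "49 \<le> exp L * exp L" by (intro order.trans[OF _ mult_mono[of 7 "exp L" 7 "exp L"]]) auto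
    moreover have "exp L * exp L = exp (2 * L)" by (metis exp_add mult_2)
    ultimately have "9 \<le> exp (2 * L)" by linarith
    hence "9 * exp (2 * M) \<le> exp (2 * L) * exp (2 * M)" by (intro mult_right_mono) auto
    hence "Q^2 \<le> exp (2 * L) * exp (2 * M)" using Q2 by linarith
    hence "Q^2 * ee (d - 2 * M) \<le> exp (2 * L) * exp (2 * M) * ee (d - 2 * M)"
      using ee_pos by (intro mult_right_mono) (auto intro: less_imp_le)
    also have "\<dots> = exp (2 * L + 2 * M - \<gamma> * d + 2 * \<gamma> * M)"
      unfolding ee_def by (simp only: exp_add[symmetric]) (simp add: algebra_simps)
    also have "\<dots> \<le> exp (- \<gamma>c * d)"
    proof -
      have a1: "L \<le> L * M" using L(3) Mf(3) by (intro mult_left_mono[of 1 M L, simplified]) auto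
      have a2: "1 * M \<le> L * M" using L(3) Mf(3) by (intro mult_right_mono) auto
      have a3: "\<gamma> * M \<le> L * M" using L(2) Mf(3) by (intro mult_right_mono) auto
      have "1 \<le> d / real lh" using d lhpos by simp
      hence a4: "L * M * 1 \<le> L * M * (d / real lh)" using L(3) Mf(3) by (intro mult_left_mono) auto
      have "- \<gamma>c * d = - \<gamma> * d + 6 * (L * M * (d / real lh))"
        unfolding \<gamma>c_def L_def using lhpos by (simp add: field_simps)
      thus ?thesis using a1 a2 a3 a4 by simp
    qed
    finally show ?thesis .
  qed
  have Qf: "1 \<le> Q" "K \<le> Q" "Q \<le> Q^2" "K \<le> Q^2" using Kpos unfolding Q_def
    by (auto simp: power2_eq_square algebra_simps)
  have comb: "c * ee t \<le> Q^2 * ee (d - 2 * M)" if "0 \<le> c" "c \<le> Q^2" "d - 2 * M \<le> t" for c t d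
    using that ee_mono[of "d - 2 * M" t] ee_pos[of t] by (intro mult_mono) (auto intro: less_imp_le)
  have main: "\<bar>G m n\<bar> \<le> Q^2 * ee (of_int (n - m) - 2 * M)"
    if mn: "m \<in> S" "n \<in> S" "m < n" "int lh \<le> n - m" for m n
  proof -
    define d where "d = real_of_int (n - m)"
    have rd: "real lh \<le> of_int n - of_int m" using mn(4) by linarith
    have am1: "a - 1 \<in> Sl" "b + 1 \<in> Sr" using part unfolding Sl_def Sr_def by auto
    have trig: "\<bar>x - y\<bar> \<le> \<bar>x\<bar> + \<bar>y\<bar>" for x y :: real by linarith
    consider "m \<in> Sl" "n \<in> Sl" | "m \<in> Sl" "n \<notin> Sl" "m < a - int l"
      | "m \<in> Sr" | "a - int l \<le> m" "m \<le> b"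
      using mn part unfolding S_def Sl_def Sr_def by force
    thus ?thesis
    proof cases
      case 1
      have r1: "\<bar>Rl m n\<bar> \<le> ee d" using Dl'(1)[OF 1] rd Mf unfolding d_def by linarith
      have "\<bar>Rl m (a-1)\<bar> \<le> ee (of_int (a - 1 - m))" using Dl'(1)[OF 1(1) am1(1)] 1 rd Mf
        unfolding Sl_def by (simp add: algebra_simps)
      also have "\<dots> \<le> ee d" using 1 unfolding d_def Sl_def by (intro ee_mono) simp
      finally have r2: "\<bar>Rl m (a-1)\<bar> \<le> ee d" .
      have "\<bar>G m n\<bar> \<le> \<bar>Rl m n\<bar> + \<bar>\<epsilon> * Rl m (a-1) * G a n\<bar>" using Fl[OF 1(1) mn(2)] trig by simp
      also have "\<dots> \<le> ee d + K * ee d" using r1 pb[OF eps(1) r2, of "G a n" K] Gall[OF mn(2)] by linarith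
      also have "\<dots> = Q * ee d" unfolding Q_def by (simp add: algebra_simps)
      also have "\<dots> \<le> Q^2 * ee (d - 2 * M)" using Qf Mf by (intro comb) auto
      finally show ?thesis unfolding d_def .
    next
      case 2
      have r2: "\<bar>Rl m (a-1)\<bar> \<le> ee (of_int (a - 1 - m))" using Dl'(1)[OF 2(1) am1(1)] 2
        unfolding Sl_def by (simp add: algebra_simps)
      have G1: "G m n = - (\<epsilon> * Rl m (a-1) * G a n)" using Fl[OF 2(1) mn(2)] Rl0[OF 2(2)] by simp
      show ?thesis
      proof (cases "n \<le> b + int l")
        case True
        have "\<bar>G m n\<bar> \<le> K * ee (of_int (a - 1 - m))" using G1 pb[OF eps(1) r2, of "G a n" K] Gall[OF mn(2)] by simp
        also have "\<dots> \<le> Q^2 * ee (d - 2 * M)" using Qf Mf Kpos True unfolding d_def by (intro comb) auto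
        finally show ?thesis unfolding d_def .
      next
        case False
        have nr: "n \<in> Sr" using False mn(2) part unfolding S_def Sr_def by auto
        have g: "\<bar>G a n\<bar> \<le> K * ee (of_int (n - b - 1))" using FarR[OF nr] False by simp
        have "\<bar>G m n\<bar> = \<epsilon> * (\<bar>Rl m (a-1)\<bar> * \<bar>G a n\<bar>)" using G1 eps by (simp add: abs_mult)
        also have "\<dots> \<le> 1 * (ee (of_int (a - 1 - m)) * (K * ee (of_int (n - b - 1))))"
          using eps1 eps r2 g by (intro mult_mono) auto
        also have "\<dots> = K * ee (of_int (a - 1 - m) + of_int (n - b - 1))" using ee_add by (simp add: algebra_simps)
        also have "\<dots> \<le> Q^2 * ee (d - 2 * M)" using Qf Mf Kpos unfolding d_def by (intro comb) auto
        finally show ?thesis unfolding d_def .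
      qed
    next
      case 3
      have nr: "n \<in> Sr" using 3 mn part unfolding S_def Sr_def by auto
      have r1: "\<bar>Rr n m\<bar> \<le> ee d" using Dr'(2)[OF 3 nr] rd Mf unfolding d_def by linarith
      have "b + 1 \<le> m" using 3 unfolding Sr_def by simp
      hence "int l \<le> n - (b + 1)" using rd Mf by linarith
      hence "\<bar>Rr n (b+1)\<bar> \<le> ee (of_int (n - (b + 1)))" using Dr'(2)[OF am1(2) nr] by blast
      also have "\<dots> \<le> ee d" using 3 unfolding d_def Sr_def by (intro ee_mono) simp
      finally have r2: "\<bar>Rr n (b+1)\<bar> \<le> ee d" .
      have "\<bar>G m n\<bar> \<le> \<bar>Rr n m\<bar> + \<bar>\<epsilon> * Rr n (b+1) * G b m\<bar>" using Fr[OF nr mn(1)] Gsym[of m n] trig by simp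
      also have "\<dots> \<le> ee d + K * ee d" using r1 pb[OF eps(1) r2, of "G b m" K] Gall[OF mn(1)] by linarith
      also have "\<dots> = Q * ee d" unfolding Q_def by (simp add: algebra_simps)
      also have "\<dots> \<le> Q^2 * ee (d - 2 * M)" using Qf Mf by (intro comb) auto
      finally show ?thesis unfolding d_def .
    next
      case 4
      have nr: "n \<in> Sr" "b + int l < n" using 4 mn part rd Mf unfolding S_def Sr_def by auto
      have r2: "\<bar>Rr n (b+1)\<bar> \<le> ee (of_int (n - b - 1))" using Dr'(2)[OF am1(2) nr(1)] nr
        by (simp add: algebra_simps)
      have mr: "m \<notin> Sr" using 4 unfolding Sr_def by auto
      have "G m n = - (\<epsilon> * Rr n (b+1) * G b m)" using Fr[OF nr(1) mn(1)] Gsym[of m n] Rr0[OF mr] by simp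
      hence "\<bar>G m n\<bar> \<le> K * ee (of_int (n - b - 1))" using pb[OF eps(1) r2, of "G b m" K] Gall[OF mn(1)] by simp
      also have "\<dots> \<le> Q^2 * ee (d - 2 * M)" using Qf Mf Kpos 4 unfolding d_def by (intro comb) auto
      finally show ?thesis unfolding d_def .
    qed
  qed
  have lhpos: "0 < lh" using Mf by simp
  have fin: "\<bar>G m n\<bar> \<le> exp (- \<gamma>c * of_int \<bar>m - n\<bar>)"
    if mn: "m \<in> S" "n \<in> S" "int lh \<le> \<bar>m - n\<bar>" for m n
  proof -
    consider "m < n" | "n < m" using mn(3) lhpos by linarith
    thus ?thesis
    proof cases
      case 1
      have "int lh \<le> n - m" using mn 1 by simp
      from main[OF mn(1,2) 1 this] num[of "of_int (n - m)"] this
      show ?thesis using 1 by (simp add: abs_minus_commute)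
    next
      case 2
      have "int lh \<le> m - n" using mn 2 by simp
      from main[OF mn(2,1) 2 this] num[of "of_int (m - n)"] this Gsym[of m n]
      show ?thesis using 2 by simp
    qed
  qed
  show ?thesis unfolding GFD_def using nsS fin unfolding S_def G_def by blast
qed

end
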